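(* Let $(T,\mathbf{m})$ be a tree with vertex capacities. If $(T,\mathbf{m})$ admits an inversion function, then the type-selected Coxeter-like complex $\Delta_{(T,\mathbf{m})}$ is shellable.
   Context: A tree with capacities $(T,\mathbf{m})$ is a finite tree $T$ together with a nonnegative integer $\mathrm{cap}(v)$ for each vertex $v$; let $N=\sum_{v}\mathrm{cap}(v)$. The complex $\Delta_{(T,\mathbf{m})}$ (the Coxeter-like complex of $S_N/(S_{\mathrm{cap}(v_1)}\times\cdots\times S_{\mathrm{cap}(v_n)})$ with generators the transpositions corresponding to edges of $T$) has as faces the following data: a set $E^C(F)$ of edges of $T$ to delete, and an assignment to each connected component $C$ of the resulting forest of exactly $\sum_{v\in C}\mathrm{cap}(v)$ labels from $[N]$, each label assigned to exactly one component; $\dim F=|E^C(F)|-1$, and $\sigma\subseteq\tau$ iff $\sigma$ is obtained from $\tau$ by merging neighboring components (uniting their label sets). It is a simplicial complex whose facets correspond to labellings of $T$ assigning $\mathrm{cap}(v)$ labels to each vertex $v$. To a face $F$ associate the labelled tree $T(F)$ whose vertices are the components of $T$ minus $E^C(F)$ (labelled by their label sets, with capacity the sum of the capacities of their vertices) and whose edges are the edges of $E^C(F)$. An inversion function for $(T,\mathbf{m})$ is a function $I$ assigning to each face $F$ a set $I(F)$ of pairs of neighboring vertices of $T(F)$ (its inversion pairs), such that for each face $\tau$ and neighboring components $C_1,C_2$ of $T(\tau)$ there is a unique redistribution of the labels collectively assigned to $C_1,C_2$ (keeping the number of labels on each) for which the resulting $\tau'$ has $(C_1,C_2)\notin I(\tau')$;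 for $(i,j)\in I(\tau)$ write $(i,j)\tau$ for this redistributed labelling. On facets (labellings of $T$) set $(i,j)\tau\prec_{weak}\tau$ for each $(i,j)\in I(\tau)$ with $i,j$ neighbors in $T$. The following must hold: (1) each face $F$ is contained in a unique facet which is inversion-free on its restriction to each component of $F$ (i.e. has no inversion pair of vertices lying in a common component of $T$ minus $E^C(F)$); (2) the transitive closure of $\prec_{weak}$ is a partial order; (3) these properties also hold on the restriction to any subforest of $T$. A shelling of a simplicial complex is a total order $F_1,\dots,F_r$ of its facets such that for each $k>1$, $\overline{F_k}\cap\bigcup_{j<k}\overline{F_j}$ is a pure codimension-one subcomplex of $\overline{F_k}$, where $\overline{F}$ is the complex of all faces of $F$. *)

theory Defs
  imports Main
begin

text \<open>A graph is given by a vertex set V and a set E of 2-element vertex sets (edges).\<close>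

definition adj :: "'v set set \<Rightarrow> ('v \<times> 'v) set" where
  "adj Es = {(u, v). {u, v} \<in> Es}"

definition comp :: "'v set set \<Rightarrow> 'v \<Rightarrow> 'v set" where
  "comp Es v = {w. (v, w) \<in> (adj Es)\<^sup>*}"

definition comps :: "'v set \<Rightarrow> 'v set set \<Rightarrow> 'v set set" where
  "comps V Es = comp Es ` V"

text \<open>A finite tree: nonempty, connected, and every edge is a bridge (acyclic).\<close>
definition is_tree :: "'v set \<Rightarrow> 'v set set \<Rightarrow> bool" where
  "is_tree V E \<longleftrightarrow> finite V \<and> V \<noteq> {} \<and>
     (\<forall>e\<in>E. \<exists>u v. e = {u, v} \<and> u \<noteq> v \<and> u \<in> V \<and> v \<in> V) \<and>
     (\<forall>u\<in>V. \<forall>v\<in>V. (u, v) \<in> (adj E)\<^sup>*) \<and>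
     (\<forall>e\<in>E. \<forall>u v. e = {u, v} \<longrightarrow> (u, v) \<notin> (adj (E - {e}))\<^sup>*)"

text \<open>A face: the set of deleted edges E^C(F), together with the assignment of a label set
  to each connected component of the resulting forest (empty outside components).\<close>
type_synonym 'v face = "'v set set \<times> ('v set \<Rightarrow> nat set)"

definition fcomps :: "'v set \<Rightarrow> 'v set set \<Rightarrow> 'v face \<Rightarrow> 'v set set" where
  "fcomps V E F = comps V (E - fst F)"

definition faces :: "'v set \<Rightarrow> 'v set set \<Rightarrow> ('v \<Rightarrow> nat) \<Rightarrow> 'v face set" where
  "faces V E cap = {(D, L). D \<subseteq> E \<and>
     (\<forall>C. C \<notin> comps V (E - D) \<longrightarrow> L C = {}) \<and>
     (\<forall>C\<in>comps V (E - D). L C \<subseteq> {1..sum cap V} \<and> card (L C) = sum cap C) \<and>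
     (\<forall>i\<in>{1..sum cap V}. \<exists>!C. C \<in> comps V (E - D) \<and> i \<in> L C)}"

text \<open>\<open>\<sigma> \<subseteq> \<tau>\<close>: \<open>\<sigma>\<close> arises from \<open>\<tau>\<close> by merging neighbouring components (uniting label sets).\<close>
definition face_le :: "'v set \<Rightarrow> 'v set set \<Rightarrow> 'v face \<Rightarrow> 'v face \<Rightarrow> bool" where
  "face_le V E \<sigma> \<tau> \<longleftrightarrow> fst \<sigma> \<subseteq> fst \<tau> \<and>
     (\<forall>C\<in>fcomps V E \<sigma>. snd \<sigma> C = \<Union>{snd \<tau> C' | C'. C' \<in> fcomps V E \<tau> \<and> C' \<subseteq> C})"

definition face_dim :: "'v face \<Rightarrow> int" where
  "face_dim F = int (card (fst F)) - 1"

text \<open>Facets of \<open>\<Delta>_(T,m)\<close>: labellings of T (all edges deleted, components are single vertices).\<close>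
definition tfacets :: "'v set \<Rightarrow> 'v set set \<Rightarrow> ('v \<Rightarrow> nat) \<Rightarrow> 'v face set" where
  "tfacets V E cap = {F \<in> faces V E cap. fst F = E}"

definition facets_of :: "'f set \<Rightarrow> ('f \<Rightarrow> 'f \<Rightarrow> bool) \<Rightarrow> 'f set" where
  "facets_of K le = {F \<in> K. \<forall>G\<in>K. le F G \<longrightarrow> G = F}"

definition closure_of_face :: "'f set \<Rightarrow> ('f \<Rightarrow> 'f \<Rightarrow> bool) \<Rightarrow> 'f \<Rightarrow> 'f set" where
  "closure_of_face K le F = {G \<in> K. le G F}"

definition pure_of_dim :: "'f set \<Rightarrow> ('f \<Rightarrow> 'f \<Rightarrow> bool) \<Rightarrow> ('f \<Rightarrow> int) \<Rightarrow> int \<Rightarrow> bool" where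
  "pure_of_dim Q le dim d \<longleftrightarrow> (\<forall>G\<in>Q. (\<forall>H\<in>Q. le G H \<longrightarrow> H = G) \<longrightarrow> dim G = d)"

definition is_shelling :: "'f set \<Rightarrow> ('f \<Rightarrow> 'f \<Rightarrow> bool) \<Rightarrow> ('f \<Rightarrow> int) \<Rightarrow> 'f list \<Rightarrow> bool" where
  "is_shelling K le dim Fs \<longleftrightarrow> distinct Fs \<and> set Fs = facets_of K le \<and>
     (\<forall>k. 0 < k \<and> k < length Fs \<longrightarrow>
        pure_of_dim (closure_of_face K le (Fs ! k) \<inter> (\<Union>j<k. closure_of_face K le (Fs ! j)))
                    le dim (dim (Fs ! k) - 1))"

definition shellable :: "'f set \<Rightarrow> ('f \<Rightarrow> 'f \<Rightarrow> bool) \<Rightarrow> ('f \<Rightarrow> int) \<Rightarrow> bool" where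
  "shellable K le dim \<longleftrightarrow> (\<exists>Fs. is_shelling K le dim Fs)"

text \<open>Ordered pairs of neighbouring vertices of T(F) (components joined by a deleted edge).\<close>
definition nbrs :: "'v set \<Rightarrow> 'v set set \<Rightarrow> 'v face \<Rightarrow> ('v set \<times> 'v set) set" where
  "nbrs V E F = {(C1, C2). C1 \<in> fcomps V E F \<and> C2 \<in> fcomps V E F \<and> C1 \<noteq> C2 \<and>
                  (\<exists>u\<in>C1. \<exists>v\<in>C2. {u, v} \<in> fst F)}"

definition redist :: "'v set \<Rightarrow> 'v set set \<Rightarrow> ('v \<Rightarrow> nat) \<Rightarrow> 'v face \<Rightarrow> 'v set \<Rightarrow> 'v set \<Rightarrow> 'v face set" where
  "redist V E cap \<tau> C1 C2 = {\<tau>' \<in> faces V E cap. fst \<tau>' = fst \<tau> \<and>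
      (\<forall>C. C \<noteq> C1 \<and> C \<noteq> C2 \<longrightarrow> snd \<tau>' C = snd \<tau> C)}"

definition swap_inv :: "'v set \<Rightarrow> 'v set set \<Rightarrow> ('v \<Rightarrow> nat) \<Rightarrow> ('v face \<Rightarrow> ('v set \<times> 'v set) set)
                        \<Rightarrow> 'v face \<Rightarrow> 'v set \<Rightarrow> 'v set \<Rightarrow> 'v face" where
  "swap_inv V E cap I \<tau> i j = (THE \<tau>'. \<tau>' \<in> redist V E cap \<tau> i j \<and> (i, j) \<notin> I \<tau>')"

text \<open>Weak order steps on facets, using only inversion pairs along edges in S
  (S = E gives the relation \<open>\<prec>_weak\<close> of T; general S \<subseteq> E its restriction to the subforest (V,S)).
  As pairs (smaller, larger).\<close>
definition weak_step :: "'v set \<Rightarrow> 'v set set \<Rightarrow> ('v \<Rightarrow> nat) \<Rightarrow> ('v face \<Rightarrow> ('v set \<times> 'v set) set)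
                         \<Rightarrow> 'v set set \<Rightarrow> ('v face \<times> 'v face) set" where
  "weak_step V E cap I S = {(swap_inv V E cap I \<tau> i j, \<tau>) | \<tau> i j.
       \<tau> \<in> tfacets V E cap \<and> (i, j) \<in> I \<tau> \<and> i \<union> j \<in> S}"

definition inv_props_on :: "'v set \<Rightarrow> 'v set set \<Rightarrow> ('v \<Rightarrow> nat) \<Rightarrow> ('v face \<Rightarrow> ('v set \<times> 'v set) set)
                            \<Rightarrow> 'v set set \<Rightarrow> bool" where
  "inv_props_on V E cap I S \<longleftrightarrow>
     (\<forall>F\<in>faces V E cap. E - S \<subseteq> fst F \<longrightarrow>
        (\<exists>!G. G \<in> tfacets V E cap \<and> face_le V E F G \<and>
              (\<forall>(a, b)\<in>I G. a \<union> b \<in> S \<longrightarrow> \<not> (\<exists>C\<in>fcomps V E F. a \<subseteq> C \<and> b \<subseteq> C)))) \<and>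
     trans ((weak_step V E cap I S)\<^sup>+) \<and> irrefl ((weak_step V E cap I S)\<^sup>+)"

definition inversion_function :: "'v set \<Rightarrow> 'v set set \<Rightarrow> ('v \<Rightarrow> nat)
                                  \<Rightarrow> ('v face \<Rightarrow> ('v set \<times> 'v set) set) \<Rightarrow> bool" where
  "inversion_function V E cap I \<longleftrightarrow>
     (\<forall>F\<in>faces V E cap. I F \<subseteq> nbrs V E F) \<and>
     (\<forall>\<tau>\<in>faces V E cap. \<forall>(C1, C2)\<in>nbrs V E \<tau>.
         \<exists>!\<tau>'. \<tau>' \<in> redist V E cap \<tau> C1 C2 \<and> (C1, C2) \<notin> I \<tau>') \<and>
     (\<forall>S. S \<subseteq> E \<longrightarrow> inv_props_on V E cap I S)"

end

theory Submission
  imports Defs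
begin


lemma adj_sym: "sym (adj Es)"
  unfolding adj_def sym_def by (auto simp: insert_commute)

lemma comp_refl: "v \<in> comp Es v" by (simp add: comp_def)

lemma comp_eq: assumes "w \<in> comp Es x" shows "comp Es w = comp Es x"
proof -
  have xw: "(x, w) \<in> (adj Es)\<^sup>*" using assms by (simp add: comp_def)
  have wx: "(w, x) \<in> (adj Es)\<^sup>*" using sym_rtrancl[OF adj_sym] xw by (meson symD)
  show ?thesis unfolding comp_def using xw wx by (auto intro: rtrancl_trans)
qed

lemma comp_empty: "comp {} v = {v}"
proof -
  have "adj ({}::'a set set) = {}" by (simp add: adj_def)
  thus ?thesis by (simp add: comp_def)
qed

lemma comps_empty: "comps V {} = (\<lambda>v. {v}) ` V"
  by (simp add: comps_def comp_empty)

lemma comp_mono: "Es \<subseteq> Es' \<Longrightarrow> comp Es v \<subseteq> comp Es' v"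
proof -
  assume "Es \<subseteq> Es'"
  hence "adj Es \<subseteq> adj Es'" by (auto simp: adj_def)
  thus ?thesis unfolding comp_def using rtrancl_mono by blast
qed

lemma comp_subset:
  assumes "\<forall>e\<in>Es. e \<subseteq> V" "v \<in> V" shows "comp Es v \<subseteq> V"
proof
  fix y assume "y \<in> comp Es v"
  hence "(v, y) \<in> (adj Es)\<^sup>*" by (simp add: comp_def)
  thus "y \<in> V"
  proof (induction rule: rtrancl_induct)
    case base then show ?case using assms by simp
  next
    case (step y z) then show ?case using assms by (auto simp: adj_def)
  qed
qed

lemma comp_same:
  assumes "C = comp Es x" "u \<in> C" "v \<in> C" shows "(u, v) \<in> (adj Es)\<^sup>*"
proof -
  have "comp Es u = C" using comp_eq assms by metis
  hence "v \<in> comp Es u" using assms(3) by simp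
  thus ?thesis by (simp add: comp_def)
qed

lemma topo_sort:
  assumes "finite A" "trans R" "irrefl R"
  shows "\<exists>xs. distinct xs \<and> set xs = A \<and>
     (\<forall>i<length xs. \<forall>j<length xs. (xs!i, xs!j) \<in> R \<longrightarrow> i < j)"
  using assms(1)
proof (induction "card A" arbitrary: A rule: less_induct)
  case less
  show ?case
  proof (cases "A = {}")
    case True then show ?thesis by (intro exI[of _ "[]"]) simp
  next
    case False
    then obtain a where a: "a \<in> A" by blast
    have fin: "finite (R \<inter> A \<times> A)" using less.prems by simp
    have acR: "acyclic R" using assms(2,3) by (simp add: acyclic_def irrefl_def trancl_id)
    have "acyclic (R \<inter> A \<times> A)" by (rule acyclic_subset[OF acR]) simp
    hence wf: "wf (R \<inter> A \<times> A)" using finite_acyclic_wf fin by blast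
    obtain m where m: "m \<in> A" "\<And>y. (y, m) \<in> R \<inter> A \<times> A \<Longrightarrow> y \<notin> A"
      using wfE_min[OF wf a] by blast
    have mmin: "(y, m) \<notin> R" if y: "y \<in> A" for y
    proof
      assume "(y, m) \<in> R"
      hence "(y, m) \<in> R \<inter> A \<times> A" using y m(1) by simp
      thus False using m(2) y by blast
    qed
    have lt: "card (A - {m}) < card A" by (rule card_Diff1_less[OF less.prems m(1)])
    have fin2: "finite (A - {m})" using less.prems by simp
    obtain ys where ys: "distinct ys" "set ys = A - {m}"
      "\<forall>i<length ys. \<forall>j<length ys. (ys!i, ys!j) \<in> R \<longrightarrow> i < j"
      using less.hyps[OF lt fin2] by blast
    show ?thesis
    proof (intro exI[of _ "m # ys"] conjI allI impI)
      show "distinct (m # ys)" using ys by simp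
      show "set (m # ys) = A" using ys(2) m(1) by auto
    next
      fix i j assume ij: "i < length (m # ys)" "j < length (m # ys)"
        "((m # ys) ! i, (m # ys) ! j) \<in> R"
      show "i < j"
      proof (cases j)
        case 0
        show ?thesis
        proof (cases i)
          case 0 then show ?thesis using ij \<open>j = 0\<close> assms(3) by (simp add: irrefl_def)
        next
          case (Suc i')
          have "i' < length ys" using ij Suc by simp
          hence "ys ! i' \<in> set ys" by simp
          hence "ys ! i' \<in> A" using ys(2) by blast
          moreover have "(ys ! i', m) \<in> R" using ij \<open>j = 0\<close> Suc by simp
          ultimately show ?thesis using mmin by blast
        qed
      next
        case (Suc j')
        show ?thesis
        proof (cases i)
          case 0 then show ?thesis using Suc by simp
        next
          case (Suc i')
          have "i' < length ys" "j' < length ys" using ij Suc \<open>j = Suc j'\<close> by auto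
          moreover have "(ys ! i', ys ! j') \<in> R" using ij Suc \<open>j = Suc j'\<close> by simp
          ultimately show ?thesis using ys(3) Suc \<open>j = Suc j'\<close> by simp
        qed
      qed
    qed
  qed
qed

lemma union_sing:
  assumes "c \<subseteq> V"
  shows "\<Union>{f C' | C'. C' \<in> (\<lambda>v. {v}) ` V \<and> C' \<subseteq> c} = (\<Union>w\<in>c. f {w})"
proof (rule set_eqI, rule iffI)
  fix x assume "x \<in> \<Union>{f C' | C'. C' \<in> (\<lambda>v. {v}) ` V \<and> C' \<subseteq> c}"
  then obtain C' where C': "C' \<in> (\<lambda>v. {v}) ` V" "C' \<subseteq> c" "x \<in> f C'" by blast
  then obtain w where "C' = {w}" by blast
  thus "x \<in> (\<Union>w\<in>c. f {w})" using C' by auto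
next
  fix x assume "x \<in> (\<Union>w\<in>c. f {w})"
  then obtain w where w: "w \<in> c" "x \<in> f {w}" by blast
  hence "{w} \<in> (\<lambda>v. {v}) ` V" "{w} \<subseteq> c" using assms by auto
  thus "x \<in> \<Union>{f C' | C'. C' \<in> (\<lambda>v. {v}) ` V \<and> C' \<subseteq> c}" using w(2) by blast
qed

lemma my_ex1_unique: "\<exists>!x. P x \<Longrightarrow> P a \<Longrightarrow> P b \<Longrightarrow> a = b" by blast

lemma faces_iff: "F \<in> faces V E cap \<longleftrightarrow> fst F \<subseteq> E \<and>
     (\<forall>C. C \<notin> comps V (E - fst F) \<longrightarrow> snd F C = {}) \<and>
     (\<forall>C\<in>comps V (E - fst F). snd F C \<subseteq> {1..sum cap V} \<and> card (snd F C) = sum cap C) \<and>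
     (\<forall>i\<in>{1..sum cap V}. \<exists>!C. C \<in> comps V (E - fst F) \<and> i \<in> snd F C)"
  by (simp only: faces_def mem_Collect_eq case_prod_beta)

lemma tfacets_iff: "\<sigma> \<in> tfacets V E cap \<longleftrightarrow> fst \<sigma> = E \<and>
     (\<forall>C. C \<notin> (\<lambda>v. {v}) ` V \<longrightarrow> snd \<sigma> C = {}) \<and>
     (\<forall>C\<in>(\<lambda>v. {v}) ` V. snd \<sigma> C \<subseteq> {1..sum cap V} \<and> card (snd \<sigma> C) = sum cap C) \<and>
     (\<forall>i\<in>{1..sum cap V}. \<exists>!C. C \<in> (\<lambda>v. {v}) ` V \<and> i \<in> snd \<sigma> C)"
proof (cases "fst \<sigma> = E")
  case True
  hence c: "comps V (E - fst \<sigma>) = (\<lambda>v. {v}) ` V" by (simp add: comps_empty)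
  show ?thesis unfolding tfacets_def mem_Collect_eq faces_iff c
    by (simp only: True subset_refl simp_thms)
next
  case False
  thus ?thesis unfolding tfacets_def mem_Collect_eq by (simp only: simp_thms)
qed

definition merge :: "'v set \<Rightarrow> 'v set set \<Rightarrow> 'v face \<Rightarrow> 'v set set \<Rightarrow> 'v face" where
  "merge V E \<sigma> D = (D, \<lambda>c. if c \<in> comps V (E - D) then (\<Union>w\<in>c. snd \<sigma> {w}) else {})"

lemma comp_both:
  assumes "(u, v) \<in> (adj Es)\<^sup>*" "c \<in> comps V Es" shows "u \<in> c \<longleftrightarrow> v \<in> c"
proof -
  obtain x where c: "c = comp Es x" using assms(2) by (auto simp: comps_def)
  have vu: "(v, u) \<in> (adj Es)\<^sup>*" using sym_rtrancl[OF adj_sym] assms(1) by (meson symD)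
  show ?thesis using c assms(1) vu by (auto simp: comp_def intro: rtrancl_trans)
qed

locale setting =
  fixes V :: "'v set" and E :: "'v set set" and cap :: "'v \<Rightarrow> nat"
    and I :: "'v face \<Rightarrow> ('v set \<times> 'v set) set"
  assumes tree: "is_tree V E" and inv: "inversion_function V E cap I"
begin

abbreviation "N \<equiv> sum cap V"

lemma finV: "finite V" using tree by (simp add: is_tree_def)
lemma edgesV: "\<forall>e\<in>E. e \<subseteq> V" using tree unfolding is_tree_def by (metis insert_subset empty_subsetI)
lemma finE: "finite E"
proof -
  have "E \<subseteq> Pow V" using edgesV by blast
  thus ?thesis using finV by (meson finite_Pow_iff finite_subset)
qed
lemma bridge: "{u, v} \<in> E \<Longrightarrow> (u, v) \<notin> (adj (E - {{u, v}}))\<^sup>*"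
  using tree unfolding is_tree_def by (metis)

lemma compsV: assumes "c \<in> comps V Es" "Es \<subseteq> E" shows "c \<subseteq> V"
proof -
  obtain x where x: "x \<in> V" "c = comp Es x" using assms(1) unfolding comps_def by blast
  have "\<forall>e\<in>Es. e \<subseteq> V" using edgesV assms(2) by blast
  thus ?thesis using comp_subset x by metis
qed

lemma invS: "S \<subseteq> E \<Longrightarrow> inv_props_on V E cap I S"
  using inv[unfolded inversion_function_def, THEN conjunct2, THEN conjunct2] by blast

lemma props1: "\<forall>F\<in>faces V E cap. E - S \<subseteq> fst F \<longrightarrow>
        (\<exists>!G. G \<in> tfacets V E cap \<and> face_le V E F G \<and>
              (\<forall>(a, b)\<in>I G. a \<union> b \<in> S \<longrightarrow> \<not> (\<exists>C\<in>fcomps V E F. a \<subseteq> C \<and> b \<subseteq> C)))"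
  if "S \<subseteq> E"
  using invS[OF that, unfolded inv_props_on_def, THEN conjunct1] .

abbreviation "W \<equiv> weak_step V E cap I E"

lemma W_trans: "trans (W\<^sup>+)"
  using invS[OF order_refl, unfolded inv_props_on_def, THEN conjunct2, THEN conjunct1] .
lemma W_irrefl: "irrefl (W\<^sup>+)"
  using invS[OF order_refl, unfolded inv_props_on_def, THEN conjunct2, THEN conjunct2] .

lemma tfD: assumes "\<sigma> \<in> tfacets V E cap"
  shows "fst \<sigma> = E" "\<forall>C. C \<notin> (\<lambda>v. {v}) ` V \<longrightarrow> snd \<sigma> C = {}"
     "\<forall>C\<in>(\<lambda>v. {v}) ` V. snd \<sigma> C \<subseteq> {1..sum cap V} \<and> card (snd \<sigma> C) = sum cap C"
     "\<forall>i\<in>{1..sum cap V}. \<exists>!C. C \<in> (\<lambda>v. {v}) ` V \<and> i \<in> snd \<sigma> C"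
  using assms[unfolded tfacets_iff]
  by (rule conjunct1, rule conjunct1[OF conjunct2], rule conjunct1[OF conjunct2[OF conjunct2]],
      rule conjunct2[OF conjunct2[OF conjunct2]])

lemma tf_w: assumes s: "\<sigma> \<in> tfacets V E cap" and w: "w \<in> V"
  shows "snd \<sigma> {w} \<subseteq> {1..N} \<and> card (snd \<sigma> {w}) = sum cap {w}"
proof -
  have "{w} \<in> (\<lambda>v. {v}) ` V" using w by (rule imageI)
  thus ?thesis using tfD(3)[OF s] by (rule bspec[rotated])
qed

lemma tf_snd_sub: "\<sigma> \<in> tfacets V E cap \<Longrightarrow> w \<in> V \<Longrightarrow> snd \<sigma> {w} \<subseteq> {1..N}"
  using tf_w by (rule conjunct1)
lemma tf_card: "\<sigma> \<in> tfacets V E cap \<Longrightarrow> w \<in> V \<Longrightarrow> card (snd \<sigma> {w}) = cap w"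
proof -
  assume a: "\<sigma> \<in> tfacets V E cap" "w \<in> V"
  have "card (snd \<sigma> {w}) = sum cap {w}" using tf_w[OF a] by (rule conjunct2)
  thus ?thesis by simp
qed
lemma tf_out: "\<sigma> \<in> tfacets V E cap \<Longrightarrow> C \<notin> (\<lambda>v. {v}) ` V \<Longrightarrow> snd \<sigma> C = {}"
proof -
  assume a: "\<sigma> \<in> tfacets V E cap" "C \<notin> (\<lambda>v. {v}) ` V"
  show ?thesis using tfD(2)[OF a(1)] a(2) by blast
qed
lemma tf_ex1: "\<sigma> \<in> tfacets V E cap \<Longrightarrow> i \<in> {1..N} \<Longrightarrow> \<exists>!C. C \<in> (\<lambda>v. {v}) ` V \<and> i \<in> snd \<sigma> C"
  using tfD(4) by (rule bspec)
lemma tf_ex: "\<sigma> \<in> tfacets V E cap \<Longrightarrow> i \<in> {1..N} \<Longrightarrow> \<exists>w\<in>V. i \<in> snd \<sigma> {w}"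
proof -
  assume a: "\<sigma> \<in> tfacets V E cap" "i \<in> {1..N}"
  have "\<exists>C. C \<in> (\<lambda>v. {v}) ` V \<and> i \<in> snd \<sigma> C" using ex1_implies_ex[OF tf_ex1[OF a]] .
  then obtain C where C: "C \<in> (\<lambda>v. {v}) ` V" "i \<in> snd \<sigma> C" by (elim exE conjE)
  from C(1) obtain w where w: "C = {w}" "w \<in> V" by (rule imageE)
  show ?thesis using C(2) w by (intro bexI[of _ w]) simp_all
qed
lemma tf_uniq: "\<sigma> \<in> tfacets V E cap \<Longrightarrow> w1 \<in> V \<Longrightarrow> w2 \<in> V \<Longrightarrow> i \<in> snd \<sigma> {w1}
   \<Longrightarrow> i \<in> snd \<sigma> {w2} \<Longrightarrow> w1 = w2"
proof -
  assume a: "\<sigma> \<in> tfacets V E cap" "w1 \<in> V" "w2 \<in> V" "i \<in> snd \<sigma> {w1}" "i \<in> snd \<sigma> {w2}"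
  have "snd \<sigma> {w1} \<subseteq> {1..N}" using tf_snd_sub[OF a(1,2)] .
  hence "i \<in> {1..N}" using a(4) by (rule subsetD)
  hence u: "\<exists>!C. C \<in> (\<lambda>v. {v}) ` V \<and> i \<in> snd \<sigma> C" by (rule tf_ex1[OF a(1)])
  have m: "{w1} \<in> (\<lambda>v. {v}) ` V" "{w2} \<in> (\<lambda>v. {v}) ` V" by (rule imageI[OF a(2)], rule imageI[OF a(3)])
  have "{w1} = {w2}" using my_ex1_unique[OF u conjI[OF m(1) a(4)] conjI[OF m(2) a(5)]] .
  thus ?thesis by simp
qed
lemma tf_faces: "\<sigma> \<in> tfacets V E cap \<Longrightarrow> \<sigma> \<in> faces V E cap" by (simp add: tfacets_def)
lemma tf_fst: "\<sigma> \<in> tfacets V E cap \<Longrightarrow> fst \<sigma> = E" by (simp add: tfacets_def)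
lemma tf_fcomps: "\<sigma> \<in> tfacets V E cap \<Longrightarrow> fcomps V E \<sigma> = (\<lambda>v. {v}) ` V"
  by (simp add: tf_fst fcomps_def comps_empty)

lemma merge_faces:
  assumes s: "\<sigma> \<in> tfacets V E cap" and D: "D \<subseteq> E"
  shows "merge V E \<sigma> D \<in> faces V E cap"
  unfolding faces_iff
proof (intro conjI ballI allI impI)
  show "fst (merge V E \<sigma> D) \<subseteq> E" using D by (simp add: merge_def)
next
  fix C assume "C \<notin> comps V (E - fst (merge V E \<sigma> D))"
  thus "snd (merge V E \<sigma> D) C = {}" by (simp add: merge_def)
next
  fix C assume C: "C \<in> comps V (E - fst (merge V E \<sigma> D))"
  hence C': "C \<in> comps V (E - D)" by (simp add: merge_def)
  hence CV: "C \<subseteq> V" using compsV by blast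
  have sndC: "snd (merge V E \<sigma> D) C = (\<Union>w\<in>C. snd \<sigma> {w})" using C' by (simp add: merge_def)
  show "snd (merge V E \<sigma> D) C \<subseteq> {1..N}" using sndC CV tf_snd_sub[OF s] by auto
  have finC: "finite C" using CV finV finite_subset by blast
  have "card (\<Union>w\<in>C. snd \<sigma> {w}) = (\<Sum>w\<in>C. card (snd \<sigma> {w}))"
  proof (rule card_UN_disjoint[OF finC])
    show "\<forall>w\<in>C. finite (snd \<sigma> {w})" using CV tf_snd_sub[OF s]
      by (meson finite_atLeastAtMost finite_subset subsetD)
    show "\<forall>w\<in>C. \<forall>w'\<in>C. w \<noteq> w' \<longrightarrow> snd \<sigma> {w} \<inter> snd \<sigma> {w'} = {}"
      using CV tf_uniq[OF s] by blast
  qed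
  also have "\<dots> = sum cap C" using CV tf_card[OF s] by (intro sum.cong) auto
  finally show "card (snd (merge V E \<sigma> D) C) = sum cap C" using sndC by simp
next
  fix i assume i: "i \<in> {1..N}"
  obtain w where w: "w \<in> V" "i \<in> snd \<sigma> {w}" using tf_ex[OF s i] by blast
  have cw: "comp (E - D) w \<in> comps V (E - D)" using w by (simp add: comps_def)
  show "\<exists>!C. C \<in> comps V (E - fst (merge V E \<sigma> D)) \<and> i \<in> snd (merge V E \<sigma> D) C"
  proof (rule ex1I[of _ "comp (E - D) w"])
    show "comp (E - D) w \<in> comps V (E - fst (merge V E \<sigma> D)) \<and>
          i \<in> snd (merge V E \<sigma> D) (comp (E - D) w)"
      using cw w comp_refl[of w "E - D"] by (auto simp: merge_def)
  next
    fix C assume C: "C \<in> comps V (E - fst (merge V E \<sigma> D)) \<and> i \<in> snd (merge V E \<sigma> D) C"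
    hence C': "C \<in> comps V (E - D)" by (simp add: merge_def)
    then obtain w' where w': "w' \<in> C" "i \<in> snd \<sigma> {w'}" using C by (auto simp: merge_def)
    have "w' \<in> V" using C' w' compsV by blast
    hence "w' = w" using tf_uniq[OF s _ w(1) w'(2) w(2)] by simp
    obtain x where "C = comp (E - D) x" using C' by (auto simp: comps_def)
    thus "C = comp (E - D) w" using comp_eq w' \<open>w' = w\<close> by metis
  qed
qed

lemma merge_le:
  assumes s: "\<sigma> \<in> tfacets V E cap" and D: "D \<subseteq> E"
  shows "face_le V E (merge V E \<sigma> D) \<sigma>"
  unfolding face_le_def
proof (intro conjI ballI)
  show "fst (merge V E \<sigma> D) \<subseteq> fst \<sigma>" using D tf_fst[OF s] by (simp add: merge_def)
next
  fix C assume C: "C \<in> fcomps V E (merge V E \<sigma> D)"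
  hence C': "C \<in> comps V (E - D)" by (simp add: merge_def fcomps_def)
  hence CV: "C \<subseteq> V" using compsV by blast
  show "snd (merge V E \<sigma> D) C = \<Union> {snd \<sigma> C' |C'. C' \<in> fcomps V E \<sigma> \<and> C' \<subseteq> C}"
    using C' CV by (auto simp: merge_def tf_fcomps[OF s])
qed

lemma merge_self: assumes s: "\<sigma> \<in> tfacets V E cap" shows "merge V E \<sigma> E = \<sigma>"
proof (rule prod_eqI)
  show "fst (merge V E \<sigma> E) = fst \<sigma>" using tf_fst[OF s] by (simp add: merge_def)
  show "snd (merge V E \<sigma> E) = snd \<sigma>"
  proof
    fix c show "snd (merge V E \<sigma> E) c = snd \<sigma> c"
      using tf_out[OF s, of c] by (auto simp: merge_def comps_empty)
  qed
qed

lemma le_merge: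
  assumes G: "G \<in> faces V E cap" and s: "\<sigma> \<in> tfacets V E cap" and le: "face_le V E G \<sigma>"
  shows "G = merge V E \<sigma> (fst G)"
proof (rule prod_eqI)
  show "fst G = fst (merge V E \<sigma> (fst G))" by (simp add: merge_def)
  have GE: "fst G \<subseteq> E" using G by (simp add: faces_iff)
  show "snd G = snd (merge V E \<sigma> (fst G))"
  proof
    fix c show "snd G c = snd (merge V E \<sigma> (fst G)) c"
    proof (cases "c \<in> comps V (E - fst G)")
      case True
      hence CV: "c \<subseteq> V" using compsV by blast
      have "snd G c = \<Union> {snd \<sigma> C' |C'. C' \<in> fcomps V E \<sigma> \<and> C' \<subseteq> c}"
        using le True unfolding face_le_def fcomps_def by blast
      thus ?thesis using True union_sing[OF CV, of "snd \<sigma>"] by (simp add: merge_def tf_fcomps[OF s])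
    next
      case False
      thus ?thesis using G by (simp add: faces_iff merge_def)
    qed
  qed
qed

lemma merge_le2:
  assumes G: "G \<in> faces V E cap" and s: "\<sigma> \<in> tfacets V E cap" and le: "face_le V E G \<sigma>"
    and GD: "fst G \<subseteq> D" and D: "D \<subseteq> E"
  shows "face_le V E G (merge V E \<sigma> D)"
  unfolding face_le_def
proof (intro conjI ballI)
  show "fst G \<subseteq> fst (merge V E \<sigma> D)" using GD by (simp add: merge_def)
next
  fix C assume C: "C \<in> fcomps V E G"
  hence C': "C \<in> comps V (E - fst G)" by (simp add: fcomps_def)
  have CV: "C \<subseteq> V" using C' compsV by blast
  define M where "M = merge V E \<sigma> (fst G)"
  have GM: "G = M" using le_merge[OF G s le] M_def by simp
  have "snd G C = snd M C" using GM by simp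
  also have "\<dots> = (\<Union>w\<in>C. snd \<sigma> {w})" using C' by (simp add: M_def merge_def)
  finally have sG: "snd G C = (\<Union>w\<in>C. snd \<sigma> {w})" .
  obtain x where Cx: "C = comp (E - fst G) x" using C' by (auto simp: comps_def)
  show "snd G C = \<Union> {snd (merge V E \<sigma> D) C' |C'. C' \<in> fcomps V E (merge V E \<sigma> D) \<and> C' \<subseteq> C}"
  proof (rule set_eqI, rule iffI)
    fix y assume "y \<in> snd G C"
    then obtain w where w: "w \<in> C" "y \<in> snd \<sigma> {w}" using sG by auto
    have wV: "w \<in> V" using w CV by blast
    have "C = comp (E - fst G) w" using comp_eq Cx w by metis
    hence sub: "comp (E - D) w \<subseteq> C" using comp_mono[of "E - D" "E - fst G" w] GD by blast
    have cm: "comp (E - D) w \<in> fcomps V E (merge V E \<sigma> D)"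
      using wV by (simp add: fcomps_def merge_def comps_def)
    have "y \<in> snd (merge V E \<sigma> D) (comp (E - D) w)"
      using wV w comp_refl[of w "E - D"] by (auto simp: merge_def comps_def)
    thus "y \<in> \<Union> {snd (merge V E \<sigma> D) C' |C'. C' \<in> fcomps V E (merge V E \<sigma> D) \<and> C' \<subseteq> C}"
      using sub cm by blast
  next
    fix y assume "y \<in> \<Union> {snd (merge V E \<sigma> D) C' |C'. C' \<in> fcomps V E (merge V E \<sigma> D) \<and> C' \<subseteq> C}"
    then obtain c where c: "c \<in> comps V (E - D)" "c \<subseteq> C" "y \<in> snd (merge V E \<sigma> D) c"
      by (auto simp: fcomps_def merge_def)
    then obtain w where "w \<in> c" "y \<in> snd \<sigma> {w}" by (auto simp: merge_def)
    thus "y \<in> snd G C" using sG c by auto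
  qed
qed

lemma inv1: "F \<in> faces V E cap \<Longrightarrow> I F \<subseteq> nbrs V E F"
  using inv[unfolded inversion_function_def, THEN conjunct1] by (rule bspec)

lemma inv2: assumes "\<tau> \<in> faces V E cap" "(C1, C2) \<in> nbrs V E \<tau>"
  shows "\<exists>!\<tau>'. \<tau>' \<in> redist V E cap \<tau> C1 C2 \<and> (C1, C2) \<notin> I \<tau>'"
proof -
  have h: "\<forall>\<tau>\<in>faces V E cap. \<forall>(C1, C2)\<in>nbrs V E \<tau>.
         \<exists>!\<tau>'. \<tau>' \<in> redist V E cap \<tau> C1 C2 \<and> (C1, C2) \<notin> I \<tau>'"
    using inv[unfolded inversion_function_def, THEN conjunct2, THEN conjunct1] .
  show ?thesis using bspec[OF bspec[OF h assms(1)] assms(2)] by (simp only: case_prod_conv)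
qed

lemma pair_sing:
  assumes s: "\<sigma> \<in> tfacets V E cap" and ab: "(a, b) \<in> I \<sigma>"
  shows "\<exists>u v. a = {u} \<and> b = {v} \<and> u \<noteq> v \<and> u \<in> V \<and> v \<in> V \<and> {u, v} \<in> E"
proof -
  have "I \<sigma> \<subseteq> nbrs V E \<sigma>" using inv1 tf_faces[OF s] by blast
  hence "(a, b) \<in> nbrs V E \<sigma>" using ab by blast
  thus ?thesis unfolding nbrs_def tf_fcomps[OF s] using tf_fst[OF s] by auto
qed

lemma swap_facts:
  assumes s: "\<sigma> \<in> tfacets V E cap" and ab: "(a, b) \<in> I \<sigma>"
  shows "swap_inv V E cap I \<sigma> a b \<in> tfacets V E cap"
    "\<forall>C. C \<noteq> a \<and> C \<noteq> b \<longrightarrow> snd (swap_inv V E cap I \<sigma> a b) C = snd \<sigma> C"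
proof -
  have "I \<sigma> \<subseteq> nbrs V E \<sigma>" using inv1 tf_faces[OF s] by blast
  hence nb: "(a, b) \<in> nbrs V E \<sigma>" using ab by blast
  have "\<exists>!\<tau>'. \<tau>' \<in> redist V E cap \<sigma> a b \<and> (a, b) \<notin> I \<tau>'"
    using inv2[OF tf_faces[OF s] nb] .
  hence "swap_inv V E cap I \<sigma> a b \<in> redist V E cap \<sigma> a b \<and> (a, b) \<notin> I (swap_inv V E cap I \<sigma> a b)"
    unfolding swap_inv_def by (rule theI')
  hence r: "swap_inv V E cap I \<sigma> a b \<in> faces V E cap \<and> fst (swap_inv V E cap I \<sigma> a b) = fst \<sigma> \<and>
     (\<forall>C. C \<noteq> a \<and> C \<noteq> b \<longrightarrow> snd (swap_inv V E cap I \<sigma> a b) C = snd \<sigma> C)"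
    unfolding redist_def mem_Collect_eq by (rule conjunct1)
  show "swap_inv V E cap I \<sigma> a b \<in> tfacets V E cap"
    unfolding tfacets_def mem_Collect_eq using r tf_fst[OF s] by simp
  show "\<forall>C. C \<noteq> a \<and> C \<noteq> b \<longrightarrow> snd (swap_inv V E cap I \<sigma> a b) C = snd \<sigma> C"
    using r by (rule conjunct2[THEN conjunct2])
qed

lemma W_sub: "W \<subseteq> tfacets V E cap \<times> tfacets V E cap"
  unfolding weak_step_def using swap_facts(1) by blast

lemma conserve:
  assumes s: "\<sigma> \<in> tfacets V E cap" and s': "\<sigma>' \<in> tfacets V E cap" and uv: "u \<in> V" "v \<in> V"
    and ag: "\<forall>C. C \<noteq> {u} \<and> C \<noteq> {v} \<longrightarrow> snd \<sigma>' C = snd \<sigma> C"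
  shows "snd \<sigma>' {u} \<union> snd \<sigma>' {v} \<subseteq> snd \<sigma> {u} \<union> snd \<sigma> {v}"
proof
  fix x assume x: "x \<in> snd \<sigma>' {u} \<union> snd \<sigma>' {v}"
  then obtain z where z: "z \<in> {u, v}" "x \<in> snd \<sigma>' {z}" by blast
  have zV: "z \<in> V" using z uv by blast
  have "x \<in> {1..N}" using z zV tf_snd_sub[OF s'] by blast
  then obtain w where w: "w \<in> V" "x \<in> snd \<sigma> {w}" using tf_ex[OF s] by blast
  show "x \<in> snd \<sigma> {u} \<union> snd \<sigma> {v}"
  proof (cases "w \<in> {u, v}")
    case True then show ?thesis using w by blast
  next
    case False
    hence "snd \<sigma>' {w} = snd \<sigma> {w}" using ag by auto
    hence "w = z" using tf_uniq[OF s' w(1) zV] w z by blast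
    thus ?thesis using False z by blast
  qed
qed

lemma merge_swap_eq:
  assumes s: "\<sigma> \<in> tfacets V E cap" and s': "\<sigma>' \<in> tfacets V E cap" and uv: "u \<in> V" "v \<in> V"
    and ag: "\<forall>C. C \<noteq> {u} \<and> C \<noteq> {v} \<longrightarrow> snd \<sigma>' C = snd \<sigma> C"
    and same: "\<forall>c\<in>comps V (E - D). u \<in> c \<longleftrightarrow> v \<in> c"
  shows "merge V E \<sigma> D = merge V E \<sigma>' D"
proof -
  have ag2: "\<forall>C. C \<noteq> {u} \<and> C \<noteq> {v} \<longrightarrow> snd \<sigma> C = snd \<sigma>' C" using ag by metis
  have c1: "snd \<sigma>' {u} \<union> snd \<sigma>' {v} = snd \<sigma> {u} \<union> snd \<sigma> {v}"
    using conserve[OF s s' uv ag] conserve[OF s' s uv ag2] by blast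
  have "\<And>c. c \<in> comps V (E - D) \<Longrightarrow> (\<Union>w\<in>c. snd \<sigma> {w}) = (\<Union>w\<in>c. snd \<sigma>' {w})"
  proof -
    fix c assume c: "c \<in> comps V (E - D)"
    show "(\<Union>w\<in>c. snd \<sigma> {w}) = (\<Union>w\<in>c. snd \<sigma>' {w})"
    proof (cases "u \<in> c")
      case True
      hence "v \<in> c" using same c by blast
      have "(\<Union>w\<in>c. snd \<sigma> {w}) = (\<Union>w\<in>c - {u, v}. snd \<sigma> {w}) \<union> (snd \<sigma> {u} \<union> snd \<sigma> {v})"
        using True \<open>v \<in> c\<close> by blast
      also have "\<dots> = (\<Union>w\<in>c - {u, v}. snd \<sigma>' {w}) \<union> (snd \<sigma>' {u} \<union> snd \<sigma>' {v})"
        using c1 ag by (auto simp: ) 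
      also have "\<dots> = (\<Union>w\<in>c. snd \<sigma>' {w})" using True \<open>v \<in> c\<close> by blast
      finally show ?thesis .
    next
      case False
      hence "v \<notin> c" using same c by blast
      have "\<And>w. w \<in> c \<Longrightarrow> snd \<sigma> {w} = snd \<sigma>' {w}"
      proof -
        fix w assume "w \<in> c"
        hence "{w} \<noteq> {u} \<and> {w} \<noteq> {v}" using False \<open>v \<notin> c\<close> by auto
        thus "snd \<sigma> {w} = snd \<sigma>' {w}" using ag by simp
      qed
      thus ?thesis by simp
    qed
  qed
  hence h: "\<And>c. c \<in> comps V (E - D) \<Longrightarrow> (\<Union>w\<in>c. snd \<sigma> {w}) = (\<Union>w\<in>c. snd \<sigma>' {w})" .
  show ?thesis unfolding merge_def by (rule arg_cong[where f="Pair D"], rule ext) (simp add: h)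
qed

end


context setting begin

lemma fin_tf: "finite (tfacets V E cap)"
proof -
  let ?S = "(\<lambda>v. {v}) ` V"
  let ?L = "{L. \<forall>x. (x \<in> ?S \<longrightarrow> L x \<in> Pow {1..N}) \<and> (x \<notin> ?S \<longrightarrow> L x = {})}"
  have fs: "finite ?L" by (rule finite_set_of_finite_funs) (simp_all add: finV)
  have "tfacets V E cap \<subseteq> (\<lambda>L. (E, L)) ` ?L"
  proof
    fix \<sigma> assume s: "\<sigma> \<in> tfacets V E cap"
    have "\<sigma> = (E, snd \<sigma>)" using tf_fst[OF s] by (metis prod.collapse)
    moreover have "snd \<sigma> \<in> ?L" unfolding mem_Collect_eq
    proof (intro allI conjI impI)
      fix x assume "x \<in> ?S"
      then obtain w where "w \<in> V" "x = {w}" by blast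
      thus "snd \<sigma> x \<in> Pow {1..N}" using tf_snd_sub[OF s] by simp
    next
      fix x assume "x \<notin> ?S"
      thus "snd \<sigma> x = {}" by (rule tf_out[OF s])
    qed
    ultimately show "\<sigma> \<in> (\<lambda>L. (E, L)) ` ?L" by (rule image_eqI)
  qed
  thus ?thesis by (rule finite_subset) (rule finite_imageI[OF fs])
qed

lemma W_wf: "wf W"
proof (rule finite_acyclic_wf)
  have "finite (tfacets V E cap \<times> tfacets V E cap)" using fin_tf by simp
  thus "finite W" by (rule finite_subset[OF W_sub])
  show "acyclic W" using W_irrefl by (simp add: acyclic_def irrefl_def)
qed

lemma faces_fst: "G \<in> faces V E cap \<Longrightarrow> fst G \<subseteq> E"
  by (rule faces_iff[THEN iffD1, THEN conjunct1])

lemma facets_eq: "facets_of (faces V E cap) (face_le V E) = tfacets V E cap"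
proof (rule set_eqI, rule iffI)
  fix F assume F: "F \<in> facets_of (faces V E cap) (face_le V E)"
  hence Ff: "F \<in> faces V E cap" and mx: "\<forall>G\<in>faces V E cap. face_le V E F G \<longrightarrow> G = F"
    unfolding facets_of_def by blast+
  have u: "\<exists>!G. G \<in> tfacets V E cap \<and> face_le V E F G \<and>
              (\<forall>(a, b)\<in>I G. a \<union> b \<in> E \<longrightarrow> \<not> (\<exists>C\<in>fcomps V E F. a \<subseteq> C \<and> b \<subseteq> C))"
    using bspec[OF props1[OF order_refl] Ff] by (rule mp) simp
  obtain G where G: "G \<in> tfacets V E cap \<and> face_le V E F G \<and>
              (\<forall>(a, b)\<in>I G. a \<union> b \<in> E \<longrightarrow> \<not> (\<exists>C\<in>fcomps V E F. a \<subseteq> C \<and> b \<subseteq> C))"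
    using ex1_implies_ex[OF u] by (rule exE)
  have "G = F" using mx tf_faces G by blast
  thus "F \<in> tfacets V E cap" using G by simp
next
  fix F assume F: "F \<in> tfacets V E cap"
  show "F \<in> facets_of (faces V E cap) (face_le V E)"
    unfolding facets_of_def mem_Collect_eq
  proof (intro conjI ballI impI)
    show "F \<in> faces V E cap" by (rule tf_faces[OF F])
    fix G assume G: "G \<in> faces V E cap" and le: "face_le V E F G"
    have "fst F \<subseteq> fst G" using le by (simp add: face_le_def)
    hence "fst G = E" using tf_fst[OF F] faces_fst[OF G] by simp
    hence Gt: "G \<in> tfacets V E cap" unfolding tfacets_def mem_Collect_eq using G by simp
    have "F = merge V E G (fst F)" by (rule le_merge[OF tf_faces[OF F] Gt le])
    also have "\<dots> = G" using tf_fst[OF F] merge_self[OF Gt] by simp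
    finally show "G = F" by simp
  qed
qed

lemma descent:
  assumes G: "G \<in> faces V E cap" and t: "\<tau> \<in> tfacets V E cap" and leT: "face_le V E G \<tau>"
    and nt: "\<forall>(a, b)\<in>I \<tau>. a \<union> b \<in> E \<longrightarrow> \<not> (\<exists>C\<in>fcomps V E G. a \<subseteq> C \<and> b \<subseteq> C)"
  shows "\<sigma> \<in> tfacets V E cap \<Longrightarrow> face_le V E G \<sigma> \<Longrightarrow> \<sigma> = \<tau> \<or> (\<tau>, \<sigma>) \<in> W\<^sup>+"
  using W_wf
proof (induction \<sigma> rule: wf_induct_rule)
  case (less \<sigma>)
  note s = less.prems(1) and leS = less.prems(2)
  have GE: "fst G \<subseteq> E" by (rule faces_fst[OF G])
  have u: "\<exists>!G'. G' \<in> tfacets V E cap \<and> face_le V E G G' \<and>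
              (\<forall>(a, b)\<in>I G'. a \<union> b \<in> E \<longrightarrow> \<not> (\<exists>C\<in>fcomps V E G. a \<subseteq> C \<and> b \<subseteq> C))"
    using bspec[OF props1[OF order_refl] G] by (rule mp) simp
  show ?case
  proof (cases "\<forall>(a, b)\<in>I \<sigma>. a \<union> b \<in> E \<longrightarrow> \<not> (\<exists>C\<in>fcomps V E G. a \<subseteq> C \<and> b \<subseteq> C)")
    case True
    have "\<sigma> = \<tau>" by (rule my_ex1_unique[OF u conjI[OF s conjI[OF leS True]] conjI[OF t conjI[OF leT nt]]])
    thus ?thesis by simp
  next
    case False
    then obtain a b where ab: "(a, b) \<in> I \<sigma>" "a \<union> b \<in> E"
      and Cab: "\<exists>C\<in>fcomps V E G. a \<subseteq> C \<and> b \<subseteq> C" by blast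
    obtain u v where uv: "a = {u}" "b = {v}" "u \<noteq> v" "u \<in> V" "v \<in> V" "{u, v} \<in> E"
      using pair_sing[OF s ab(1)] by blast
    obtain C where C: "C \<in> fcomps V E G" "u \<in> C" "v \<in> C" using Cab uv by blast
    define \<sigma>' where "\<sigma>' = swap_inv V E cap I \<sigma> a b"
    have s': "\<sigma>' \<in> tfacets V E cap" using swap_facts(1)[OF s ab(1)] \<sigma>'_def by simp
    have ag: "\<forall>C. C \<noteq> {u} \<and> C \<noteq> {v} \<longrightarrow> snd \<sigma>' C = snd \<sigma> C"
      using swap_facts(2)[OF s ab(1)] \<sigma>'_def uv by simp
    have step: "(\<sigma>', \<sigma>) \<in> W" unfolding weak_step_def \<sigma>'_def using s ab by blast
    have same: "\<forall>c\<in>comps V (E - fst G). u \<in> c \<longleftrightarrow> v \<in> c"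
    proof
      fix c assume c: "c \<in> comps V (E - fst G)"
      have C': "C \<in> comps V (E - fst G)" using C(1) by (simp add: fcomps_def)
      obtain x where Cx: "C = comp (E - fst G) x" using C' by (auto simp: comps_def)
      have "(u, v) \<in> (adj (E - fst G))\<^sup>*" by (rule comp_same[OF Cx C(2,3)])
      thus "u \<in> c \<longleftrightarrow> v \<in> c" by (rule comp_both[OF _ c])
    qed
    have "G = merge V E \<sigma> (fst G)" by (rule le_merge[OF G s leS])
    also have "\<dots> = merge V E \<sigma>' (fst G)" by (rule merge_swap_eq[OF s s' uv(4,5) ag same])
    finally have GM: "G = merge V E \<sigma>' (fst G)" .
    have "face_le V E (merge V E \<sigma>' (fst G)) \<sigma>'" by (rule merge_le[OF s' GE])
    hence leS': "face_le V E G \<sigma>'" by (rule ssubst[where P="\<lambda>X. face_le V E X \<sigma>'", OF GM])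
    have IH: "\<sigma>' = \<tau> \<or> (\<tau>, \<sigma>') \<in> W\<^sup>+" using less.IH[OF step s' leS'] .
    thus ?thesis
    proof
      assume "\<sigma>' = \<tau>"
      hence "(\<tau>, \<sigma>) \<in> W" using step by simp
      hence "(\<tau>, \<sigma>) \<in> W\<^sup>+" by (rule r_into_trancl)
      thus ?thesis by (rule disjI2)
    next
      assume "(\<tau>, \<sigma>') \<in> W\<^sup>+"
      hence "(\<tau>, \<sigma>) \<in> W\<^sup>+" using step by (rule trancl_into_trancl)
      thus ?thesis by (rule disjI2)
    qed
  qed
qed

lemma shell: "shellable (faces V E cap) (face_le V E) face_dim"
proof -
  obtain Fs where Fs: "distinct Fs" "set Fs = tfacets V E cap"
    "\<forall>i<length Fs. \<forall>j<length Fs. (Fs!i, Fs!j) \<in> W\<^sup>+ \<longrightarrow> i < j"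
    using topo_sort[OF fin_tf W_trans W_irrefl] by blast
  show ?thesis unfolding shellable_def is_shelling_def
  proof (intro exI[of _ Fs] conjI allI impI)
    show "distinct Fs" by (rule Fs(1))
    show "set Fs = facets_of (faces V E cap) (face_le V E)" using Fs(2) facets_eq by simp
  next
    fix k assume k: "0 < k \<and> k < length Fs"
    define \<tau> where "\<tau> = Fs ! k"
    have t: "\<tau> \<in> tfacets V E cap" using k Fs(2) \<tau>_def nth_mem by blast
    show "pure_of_dim (closure_of_face (faces V E cap) (face_le V E) (Fs ! k) \<inter>
          (\<Union>j<k. closure_of_face (faces V E cap) (face_le V E) (Fs ! j)))
           (face_le V E) face_dim (face_dim (Fs ! k) - 1)"
      unfolding pure_of_dim_def
    proof (intro ballI impI)
      fix G assume GQ: "G \<in> closure_of_face (faces V E cap) (face_le V E) (Fs ! k) \<inter>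
          (\<Union>j<k. closure_of_face (faces V E cap) (face_le V E) (Fs ! j))"
        and mx: "\<forall>H\<in>closure_of_face (faces V E cap) (face_le V E) (Fs ! k) \<inter>
          (\<Union>j<k. closure_of_face (faces V E cap) (face_le V E) (Fs ! j)). face_le V E G H \<longrightarrow> H = G"
      have G: "G \<in> faces V E cap" "face_le V E G \<tau>"
        using GQ unfolding closure_of_face_def \<tau>_def by auto
      obtain j where j: "j < k" "face_le V E G (Fs!j)"
        using GQ unfolding closure_of_face_def by auto
      have GE: "fst G \<subseteq> E" by (rule faces_fst[OF G(1)])
      have "\<exists>(a, b)\<in>I \<tau>. a \<union> b \<in> E \<and> (\<exists>C\<in>fcomps V E G. a \<subseteq> C \<and> b \<subseteq> C)"
      proof (rule ccontr)
        assume "\<not> (\<exists>(a, b)\<in>I \<tau>. a \<union> b \<in> E \<and> (\<exists>C\<in>fcomps V E G. a \<subseteq> C \<and> b \<subseteq> C))"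
        hence nt: "\<forall>(a, b)\<in>I \<tau>. a \<union> b \<in> E \<longrightarrow> \<not> (\<exists>C\<in>fcomps V E G. a \<subseteq> C \<and> b \<subseteq> C)" by blast
        have jl: "j < length Fs" using j k by simp
        have sj: "Fs!j \<in> tfacets V E cap" using jl Fs(2) nth_mem by blast
        have "Fs!j = \<tau> \<or> (\<tau>, Fs!j) \<in> W\<^sup>+" by (rule descent[OF G(1) t G(2) nt sj j(2)])
        thus False
        proof
          assume "Fs!j = \<tau>"
          hence "j = k" using Fs(1) jl k \<tau>_def nth_eq_iff_index_eq by metis
          thus False using j by simp
        next
          assume "(\<tau>, Fs!j) \<in> W\<^sup>+"
          hence "k < j" using Fs(3) jl k \<tau>_def by blast
          thus False using j by simp
        qed
      qed
      then obtain a b where ab: "(a, b) \<in> I \<tau>"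
        and Cab: "\<exists>C\<in>fcomps V E G. a \<subseteq> C \<and> b \<subseteq> C" by blast
      obtain u v where uv: "a = {u}" "b = {v}" "u \<noteq> v" "u \<in> V" "v \<in> V" "{u, v} \<in> E"
        using pair_sing[OF t ab] by blast
      obtain C where C: "C \<in> fcomps V E G" "u \<in> C" "v \<in> C" using Cab uv by blast
      define e where "e = {u, v}"
      have eE: "e \<in> E" using uv(6) e_def by simp
      have uvG: "(u, v) \<in> (adj (E - fst G))\<^sup>*"
      proof -
        have C': "C \<in> comps V (E - fst G)" using C(1) by (simp add: fcomps_def)
        obtain x where Cx: "C = comp (E - fst G) x" using C' by (auto simp: comps_def)
        show ?thesis by (rule comp_same[OF Cx C(2,3)])
      qed
      have "e \<notin> fst G"
      proof
        assume "e \<in> fst G"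
        hence "adj (E - fst G) \<subseteq> adj (E - {e})" by (auto simp: adj_def)
        hence "(u, v) \<in> (adj (E - {e}))\<^sup>*" using uvG rtrancl_mono by blast
        thus False using bridge[OF uv(6)] e_def by simp
      qed
      define D where "D = E - {e}"
      have GD: "fst G \<subseteq> D" using GE \<open>e \<notin> fst G\<close> D_def by blast
      have DE: "D \<subseteq> E" by (simp add: D_def)
      define H where "H = merge V E \<tau> D"
      have Hf: "H \<in> faces V E cap" using merge_faces[OF t DE] H_def by simp
      have HleT: "face_le V E H \<tau>" using merge_le[OF t DE] H_def by simp
      define \<tau>' where "\<tau>' = swap_inv V E cap I \<tau> a b"
      have t': "\<tau>' \<in> tfacets V E cap" using swap_facts(1)[OF t ab] \<tau>'_def by simp
      have ag: "\<forall>C. C \<noteq> {u} \<and> C \<noteq> {v} \<longrightarrow> snd \<tau>' C = snd \<tau> C"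
        using swap_facts(2)[OF t ab] \<tau>'_def uv by simp
      have abE: "a \<union> b \<in> E" using uv(1,2,6) by (simp add: insert_commute)
      have step: "(\<tau>', \<tau>) \<in> W" unfolding weak_step_def \<tau>'_def using t ab abE by blast
      have ED: "E - D = {e}" using eE D_def by blast
      have "(u, v) \<in> adj (E - D)" unfolding ED adj_def e_def by simp
      hence "(u, v) \<in> (adj (E - D))\<^sup>*" by (rule r_into_rtrancl)
      hence sameD: "\<forall>c\<in>comps V (E - D). u \<in> c \<longleftrightarrow> v \<in> c" using comp_both by (intro ballI)
      have "H = merge V E \<tau>' D" using merge_swap_eq[OF t t' uv(4,5) ag sameD] H_def by simp
      hence Hle': "face_le V E H \<tau>'" using merge_le[OF t' DE] by simp
      obtain j' where j': "j' < length Fs" "Fs!j' = \<tau>'" using t' Fs(2) by (metis in_set_conv_nth)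
      have "(Fs!j', Fs!k) \<in> W\<^sup>+" using step j'(2) \<tau>_def by auto
      hence "j' < k" using Fs(3) j'(1) k by blast
      have HQ: "H \<in> closure_of_face (faces V E cap) (face_le V E) (Fs ! k) \<inter>
          (\<Union>j<k. closure_of_face (faces V E cap) (face_le V E) (Fs ! j))"
        unfolding closure_of_face_def using Hf HleT Hle' j' \<open>j' < k\<close> \<tau>_def by auto
      have "face_le V E G H" using merge_le2[OF G(1) t G(2) GD DE] H_def by simp
      hence HG: "H = G" using mx HQ by blast
      have cD: "card D = card E - 1" using D_def eE finE by (simp add: card_Diff_singleton)
      have cE: "card E \<ge> 1" using eE finE by (metis One_nat_def Suc_leI card_gt_0_iff empty_iff)
      have fH: "fst H = D" by (simp add: H_def merge_def)
      have "fst G = D" using HG fH by simp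
      hence "face_dim G = int (card D) - 1" by (simp add: face_dim_def)
      also have "\<dots> = face_dim (Fs ! k) - 1"
        using cD cE tf_fst[OF t] \<tau>_def by (simp add: face_dim_def of_nat_diff)
      finally show "face_dim G = face_dim (Fs ! k) - 1" .
    qed
  qed
qed

end

theorem mainTheorem3:
  fixes V :: "'v set" and E :: "'v set set" and cap :: "'v \<Rightarrow> nat"
  assumes "is_tree V E"
    and "\<exists>I. inversion_function V E cap I"
  shows "shellable (faces V E cap) (face_le V E) face_dim"
proof -
  from assms(2) obtain I where I: "inversion_function V E cap I" by blast
  interpret setting V E cap I using assms(1) I by unfold_locales
  show ?thesis by (rule shell)
qed


end
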